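(* Let $\mathcal{G}=(V,E,\lambda)$ be a happy temporal graph whose footprint $(V,E)$ is a complete graph. Then $\mathcal{G}$ is bidirectionally temporally connected, but for every edge $e\in E$, the temporal graph obtained from $\mathcal{G}$ by removing $e$ is not bidirectionally temporally connected.
   Context: A temporal graph is $\mathcal{G}=(V,E,\lambda)$ with $V$ finite, $E$ undirected edges, $\lambda:E\to 2^{\mathbb{N}}$ the time labels; $(V,E)$ is the footprint. It is simple if every edge has exactly one label, proper if no two adjacent edges share a label, and happy if both simple and proper. A temporal path is a sequence of pairs $(e_i,t_i)$, $t_i\in\lambda(e_i)$, with $\langle e_i\rangle$ a path in the footprint and $\langle t_i\rangle$ non-decreasing (non-strict) or increasing (strict); in proper graphs the two notions coincide. A bi-path between $u$ and $v$ is a pair $(p_1,p_2)$ with $p_1$ a temporal path from $u$ to $v$ and $p_2$ a temporal path from $v$ to $u$ along the same underlying path reversed. $\mathcal{G}$ is bidirectionally temporally connected if every pair of distinct vertices is joined by a bi-path. *)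

theory Defs
  imports Main
begin

definition temporal_graph :: "'a set \<Rightarrow> 'a set set \<Rightarrow> bool" where
  "temporal_graph V E \<longleftrightarrow> finite V \<and>
     (\<forall>e\<in>E. \<exists>u v. u \<in> V \<and> v \<in> V \<and> u \<noteq> v \<and> e = {u, v})"

definition complete_footprint :: "'a set \<Rightarrow> 'a set set \<Rightarrow> bool" where
  "complete_footprint V E \<longleftrightarrow> E = {{u, v} | u v. u \<in> V \<and> v \<in> V \<and> u \<noteq> v}"

definition simple_tg :: "'a set set \<Rightarrow> ('a set \<Rightarrow> nat set) \<Rightarrow> bool" where
  "simple_tg E lam \<longleftrightarrow> (\<forall>e\<in>E. card (lam e) = 1)"

definition proper_tg :: "'a set set \<Rightarrow> ('a set \<Rightarrow> nat set) \<Rightarrow> bool" where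
  "proper_tg E lam \<longleftrightarrow> (\<forall>e1\<in>E. \<forall>e2\<in>E. e1 \<noteq> e2 \<and> e1 \<inter> e2 \<noteq> {} \<longrightarrow> lam e1 \<inter> lam e2 = {})"

definition happy_tg :: "'a set set \<Rightarrow> ('a set \<Rightarrow> nat set) \<Rightarrow> bool" where
  "happy_tg E lam \<longleftrightarrow> simple_tg E lam \<and> proper_tg E lam"

definition temporal_path :: "'a set set \<Rightarrow> ('a set \<Rightarrow> nat set) \<Rightarrow> 'a list \<Rightarrow> nat list \<Rightarrow> bool" where
  "temporal_path E lam vs ts \<longleftrightarrow>
     length vs = Suc (length ts) \<and> distinct vs \<and>
     (\<forall>i < length ts. {vs ! i, vs ! Suc i} \<in> E \<and> ts ! i \<in> lam {vs ! i, vs ! Suc i}) \<and>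
     sorted ts"

definition bipath :: "'a set set \<Rightarrow> ('a set \<Rightarrow> nat set) \<Rightarrow> 'a \<Rightarrow> 'a \<Rightarrow> bool" where
  "bipath E lam u v \<longleftrightarrow> (\<exists>vs ts1 ts2. vs \<noteq> [] \<and> hd vs = u \<and> last vs = v \<and>
     temporal_path E lam vs ts1 \<and> temporal_path E lam (rev vs) ts2)"

definition bi_temporally_connected :: "'a set \<Rightarrow> 'a set set \<Rightarrow> ('a set \<Rightarrow> nat set) \<Rightarrow> bool" where
  "bi_temporally_connected V E lam \<longleftrightarrow>
     (\<forall>u\<in>V. \<forall>v\<in>V. u \<noteq> v \<longrightarrow> bipath E lam u v)"

end

theory Submission
  imports Defs
begin

lemma single_label:
  assumes "card (A::nat set) = 1" "a \<in> A" "b \<in> A" shows "a = b"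
  using assms by (metis card_1_singletonE singletonD)

theorem lemma4:
  fixes V :: "'a set" and E :: "'a set set" and lam :: "'a set \<Rightarrow> nat set"
  assumes "temporal_graph V E"
    and "happy_tg E lam"
    and "complete_footprint V E"
  shows "bi_temporally_connected V E lam \<and>
         (\<forall>e\<in>E. \<not> bi_temporally_connected V (E - {e}) lam)"
proof
  have hsim: "\<And>e. e \<in> E \<Longrightarrow> card (lam e) = 1" using assms(2) by (auto simp: happy_tg_def simple_tg_def)
  have hprop: "\<And>e1 e2. e1 \<in> E \<Longrightarrow> e2 \<in> E \<Longrightarrow> e1 \<noteq> e2 \<Longrightarrow> e1 \<inter> e2 \<noteq> {} \<Longrightarrow> lam e1 \<inter> lam e2 = {}"
    using assms(2) by (auto simp: happy_tg_def proper_tg_def)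
  have Eeq: "E = {{u, v} | u v. u \<in> V \<and> v \<in> V \<and> u \<noteq> v}" using assms(3) complete_footprint_def by blast
  show "bi_temporally_connected V E lam"
    unfolding bi_temporally_connected_def
  proof (intro ballI impI)
    fix u v assume uv: "u \<in> V" "v \<in> V" "u \<noteq> v"
    have eE: "{u,v} \<in> E" using uv Eeq by blast
    then obtain t where t: "lam {u,v} = {t}" using hsim by (meson card_1_singletonE)
    have "temporal_path E lam [u,v] [t]" using uv eE t by (simp add: temporal_path_def)
    moreover have "temporal_path E lam [v,u] [t]" using uv eE t by (simp add: temporal_path_def insert_commute)
    ultimately show "bipath E lam u v" unfolding bipath_def
      by (rule_tac x="[u,v]" in exI) auto
  qed
  show "\<forall>e\<in>E. \<not> bi_temporally_connected V (E - {e}) lam"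
  proof (intro ballI notI)
    fix e assume eE: "e \<in> E" and bc: "bi_temporally_connected V (E - {e}) lam"
    obtain u v where uv: "u \<in> V" "v \<in> V" "u \<noteq> v" "e = {u,v}" using eE Eeq by blast
    then have "bipath (E - {e}) lam u v" using bc bi_temporally_connected_def by metis
    then obtain vs ts1 ts2 where vs: "vs \<noteq> []" "hd vs = u" "last vs = v"
      and p1: "temporal_path (E - {e}) lam vs ts1" and p2: "temporal_path (E - {e}) lam (rev vs) ts2"
      unfolding bipath_def by blast
    define n where "n = length vs"
    have l1: "length ts1 = n - 1" "length ts2 = n - 1" "distinct vs" using p1 p2 n_def by (auto simp: temporal_path_def)
    have e1: "\<And>i. i < n - 1 \<Longrightarrow> {vs ! i, vs ! Suc i} \<in> E - {e} \<and> ts1 ! i \<in> lam {vs ! i, vs ! Suc i}"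
      using p1 l1 by (auto simp: temporal_path_def)
    have e2: "\<And>i. i < n - 1 \<Longrightarrow> {rev vs ! i, rev vs ! Suc i} \<in> E - {e} \<and> ts2 ! i \<in> lam {rev vs ! i, rev vs ! Suc i}"
      using p2 l1 by (auto simp: temporal_path_def)
    have s1: "sorted ts1" "sorted ts2" using p1 p2 by (auto simp: temporal_path_def)
    have v0: "vs ! 0 = u" using vs by (simp add: hd_conv_nth)
    have vl: "vs ! (n - 1) = v" using vs n_def by (simp add: last_conv_nth)
    have "n \<ge> 2" using v0 vl uv vs n_def by (cases n; cases "n - 1") auto
    have "n \<noteq> 2"
    proof
      assume "n = 2"
      then have "{vs ! 0, vs ! Suc 0} \<in> E - {e}" using e1[of 0] by simp
      then show False using v0 vl uv \<open>n = 2\<close> by simp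
    qed
    hence n3: "n \<ge> 3" using \<open>n \<ge> 2\<close> by simp
    define a where "a = {vs ! 0, vs ! 1}"
    define b where "b = {vs ! 1, vs ! 2}"
    have aE: "a \<in> E" "ts1 ! 0 \<in> lam a" using e1[of 0] n3 a_def by auto
    have bE: "b \<in> E" "ts1 ! 1 \<in> lam b" using e1[of 1] n3 b_def by (auto simp: numeral_2_eq_2)
    have d: "vs ! 0 \<noteq> vs ! 2" "vs ! 0 \<noteq> vs ! 1" "vs ! 1 \<noteq> vs ! 2"
      proof -
      have lt: "0 < length vs" "1 < length vs" "2 < length vs" using n3 n_def by auto
      have D: "\<And>i j. i < length vs \<Longrightarrow> j < length vs \<Longrightarrow> i \<noteq> j \<Longrightarrow> vs ! i \<noteq> vs ! j"
        using l1(3) by (simp add: distinct_conv_nth)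
      show "vs ! 0 \<noteq> vs ! 2" "vs ! 0 \<noteq> vs ! 1" "vs ! 1 \<noteq> vs ! 2"
        using D[OF lt(1) lt(3)] D[OF lt(1) lt(2)] D[OF lt(2) lt(3)] by auto
    qed
    have ab: "a \<noteq> b" using d a_def b_def by (auto simp: doubleton_eq_iff)
    have ab2: "a \<inter> b \<noteq> {}" using a_def b_def by auto
    have disj: "lam a \<inter> lam b = {}" using hprop aE bE ab ab2 by blast
    have lt1: "ts1 ! 0 < ts1 ! 1"
    proof -
      have "ts1 ! 0 \<le> ts1 ! 1" using s1(1) l1 n3 by (auto simp: sorted_iff_nth_mono)
      moreover have "ts1 ! 0 \<noteq> ts1 ! 1" using disj aE bE by auto
      ultimately show ?thesis by simp
    qed
    have r1: "rev vs ! (n - 3) = vs ! 2" "rev vs ! Suc (n - 3) = vs ! 1" "rev vs ! Suc (n - 2) = vs ! 0"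
      using n3 n_def by (auto simp: rev_nth Suc_diff_Suc numeral_3_eq_3 numeral_2_eq_2)
    have "Suc (n-3) = n - 2" using n3 by simp
    have bE2: "ts2 ! (n-3) \<in> lam b" using e2[of "n-3"] n3 r1 b_def by (auto simp: insert_commute)
    have aE2: "ts2 ! (n-2) \<in> lam a" using e2[of "n-2"] n3 r1 a_def \<open>Suc (n-3) = n - 2\<close> by (auto simp: insert_commute)
    have lt2: "ts2 ! (n-3) < ts2 ! (n-2)"
    proof -
      have "ts2 ! (n-3) \<le> ts2 ! (n-2)" using s1(2) l1 n3 by (auto simp: sorted_iff_nth_mono)
      moreover have "ts2 ! (n-3) \<noteq> ts2 ! (n-2)" using disj aE2 bE2 by auto
      ultimately show ?thesis by simp
    qed
    have "ts1 ! 0 = ts2 ! (n-2)" using single_label[OF hsim[OF aE(1)]] aE aE2 by blast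
    moreover have "ts1 ! 1 = ts2 ! (n-3)" using single_label[OF hsim[OF bE(1)]] bE bE2 by blast
    ultimately show False using lt1 lt2 by simp
  qed
qed

end
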